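(* Define integers $Q(n)$ by $Q(0)=0$, $Q(1)=1$ and $Q(n)=b(n)Q(n-1)+Q(n-2)$ for $n\ge2$, where $b(n)=2n/3$ if $3\mid n$ and $b(n)=1$ if $3\nmid n$. Let $n>1$ be an integer and let $N$ be the unique integer with $3N\le n<3(N+1)$. If $m$ is a positive integer with $Q(n)\le m!$, then $N<m$ and $n<3m$.
   Context: $Q(n)$ is the denominator of the $n$th convergent of the simple continued fraction $e=[2,1,2,1,1,4,1,1,6,\dots]$; its first values are $0,1,1,3,4,7,32,39,71,465,\dots$. *)

theory Defs
  imports Main
begin

definition b :: "nat \<Rightarrow> int" where
  "b n = (if 3 dvd n then int (2 * n div 3) else 1)"

fun Q :: "nat \<Rightarrow> int" where
  "Q 0 = 0"
| "Q (Suc 0) = 1"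
| "Q (Suc (Suc n)) = b (Suc (Suc n)) * Q (Suc n) + Q n"

end

theory Submission
  imports Defs
begin

lemma b_ge1: "b (Suc (Suc n)) \<ge> 1"
  unfolding b_def by auto

lemma Q_mono_step: "0 \<le> Q n \<and> Q n \<le> Q (Suc n)"
proof (induction n rule: nat_less_induct)
  case (1 n)
  show ?case
  proof (cases n)
    case 0 then show ?thesis by simp
  next
    case (Suc k)
    show ?thesis
    proof (cases k)
      case 0 then show ?thesis using Suc b_ge1[of 0] by simp
    next
      case (Suc j)
      have h1: "0 \<le> Q j" "0 \<le> Q k" "Q j \<le> Q k" "Q k \<le> Q n" using 1 Suc \<open>n = Suc k\<close> by auto
      have hb: "b (Suc (Suc k)) \<ge> 1" by (rule b_ge1)
      have "Q (Suc n) = b (Suc (Suc k)) * Q n + Q k" using \<open>n = Suc k\<close> by simp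
      moreover have "b (Suc (Suc k)) * Q n \<ge> Q n" using hb h1
        by (metis mult_le_cancel_right1 order_trans linorder_not_le)
      moreover have "Q n = b (Suc k) * Q k + Q j" using Suc \<open>n = Suc k\<close> by simp
      moreover have "b (Suc k) \<ge> 1" using Suc b_ge1 by simp
      ultimately show ?thesis using h1
        by (smt (verit) mult_nonneg_nonneg)
    qed
  qed
qed

lemma Q_mono: "i \<le> j \<Longrightarrow> Q i \<le> Q j"
  by (induction j rule: dec_induct) (auto intro: order_trans Q_mono_step[THEN conjunct2])

lemma Q3: "k \<ge> 1 \<Longrightarrow> Q (3 * k) \<ge> 3 * int (fact k)"
proof (induction k rule: dec_induct)
  case base
  have "b 2 = 1" "b 3 = 2" unfolding b_def by auto
  then show ?case by (simp add: numeral_3_eq_3 numeral_2_eq_2)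
next
  case (step k)
  have e: "3 * Suc k = Suc (Suc (3 * k + 1))" by simp
  have bb: "b (3 * Suc k) = 2 * int (Suc k)" unfolding b_def by auto
  have eq0: "Q (3 * Suc k) = b (3 * Suc k) * Q (3*k+2) + Q (3*k+1)"
  proof -
    have "Q (Suc (Suc (3 * k + 1))) = b (Suc (Suc (3 * k + 1))) * Q (Suc (3*k+1)) + Q (3*k+1)"
      by (rule Q.simps(3))
    moreover have "Suc (3*k+1) = 3*k+2" by simp
    ultimately show ?thesis using e by metis
  qed
  then have "Q (3 * Suc k) = 2 * int (Suc k) * Q (3*k+2) + Q (3*k+1)" by (simp only: bb)
  moreover have q1: "Q (3*k) \<le> Q (3*k+2)" by (rule Q_mono) simp
  moreover have q2: "0 \<le> Q (3*k+1)" using Q_mono_step[of "3*k+1"] by (rule conjunct1)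
  moreover have q3: "0 \<le> Q (3*k)" using Q_mono_step[of "3*k"] by (rule conjunct1)
  moreover have "int (Suc k) * Q (3*k) \<le> 2 * int (Suc k) * Q (3*k+2)"
  proof -
    have "int (Suc k) * Q (3*k) \<le> int (Suc k) * Q (3*k+2)" using q1 by (intro mult_left_mono) auto
    also have "\<dots> \<le> 2 * int (Suc k) * Q (3*k+2)"
    proof -
      have "0 \<le> Q (3*k+2)" using q1 q3 by linarith
      moreover have "\<And>x c::int. 0 \<le> x \<Longrightarrow> 0 \<le> c \<Longrightarrow> c * x \<le> 2 * c * x" by (simp add: mult_nonneg_nonneg)
      ultimately show ?thesis by (metis of_nat_0_le_iff)
    qed
    finally show ?thesis .
  qed
  ultimately have "Q (3 * Suc k) \<ge> int (Suc k) * Q (3*k)" by linarith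
  moreover have "int (Suc k) * Q (3*k) \<ge> int (Suc k) * (3 * int (fact k))"
    using step by (intro mult_left_mono) auto
  ultimately show ?case by (simp add: algebra_simps)
qed

theorem lemmaA3:
  fixes n m N :: nat
  assumes "n > 1"
    and "3 * N \<le> n" and "n < 3 * (N + 1)"
    and "m > 0"
    and "Q n \<le> int (fact m)"
  shows "N < m \<and> n < 3 * m"
proof -
  have "N < m"
  proof (rule ccontr)
    assume "\<not> N < m"
    hence mN: "m \<le> N" by simp
    hence "N \<ge> 1" using assms(4) by simp
    hence "3 * int (fact N) \<le> Q (3*N)" by (rule Q3)
    also have "\<dots> \<le> Q n" using Q_mono assms(2) by blast
    finally have "3 * int (fact N) \<le> int (fact m)" using assms(5) by simp
    moreover have "fact m \<le> (fact N :: nat)" using mN by (rule fact_mono_nat)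
    moreover have "(fact N :: nat) > 0" by simp
    ultimately show False by linarith
  qed
  thus ?thesis using assms(3) by simp
qed

end
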